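(* Let $X=\{X^1,\dots,X^m\}\subseteq S_n$ and let $M_X$ be the $m\times n$ real matrix whose $i$-th row is $X^i$. If the columns of $M_X$ are linearly dependent over $\mathbb{R}$, then $\mathrm{Elim}(X)\neq S_n$. In particular, if $\mathrm{Elim}(X)=S_n$ and $|X|=n$, then $X^1,\dots,X^n$ are linearly independent.
   Context: $S_n$ is the set of all nonzero $n$-tuples in $\{-1,0,1\}^n$ whose first nonzero entry equals $1$. A tuple $t=(t_1,\dots,t_n)\in\{1,0,-1,u\}^n$ ($u$ a formal symbol) eliminates $s\in S_n$ if: (i) $t_i\neq0$ and $s_i\neq0$ for some $i$; (ii) there is $k\in\{+1,-1\}$ with $t_i=ks_i$ for all $i$ with $s_i\neq0$ and $t_i\neq0$; (iii) $s_i=0$ whenever $t_i=u$. For $X\subseteq S_n$, $\mathrm{Elim}(X)$ is the set of elements of $S_n$ eliminated by at least one element of $X$. *)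

theory Defs
  imports Complex_Main
begin

definition S :: "nat \<Rightarrow> int list set" where
  "S n = {s. length s = n \<and> set s \<subseteq> {-1, 0, 1} \<and>
             (\<exists>i<n. s ! i \<noteq> 0 \<and> s ! i = 1 \<and> (\<forall>j<i. s ! j = 0))}"

(* entries of an eliminating tuple: an integer value or the formal symbol u *)
datatype tentry = V int | U

definition eliminates :: "tentry list \<Rightarrow> int list \<Rightarrow> bool" where
  "eliminates t s \<longleftrightarrow> length t = length s \<and>
     (\<exists>i<length s. t ! i \<noteq> V 0 \<and> s ! i \<noteq> 0) \<and>
     (\<exists>k\<in>{1, -1::int}. \<forall>i<length s. s ! i \<noteq> 0 \<and> t ! i \<noteq> V 0 \<longrightarrow> t ! i = V (k * s ! i)) \<and>
     (\<forall>i<length s. t ! i = U \<longrightarrow> s ! i = 0)"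

definition Elim :: "nat \<Rightarrow> int list set \<Rightarrow> int list set" where
  "Elim n X = {s \<in> S n. \<exists>x\<in>X. eliminates (map V x) s}"

end

theory Submission
  imports Defs "Jordan_Normal_Form.Determinant"
begin

lemma part1:
  assumes X: "X \<subseteq> S n" and j0: "j0 < n" "c j0 \<noteq> (0::real)"
    and hc: "\<forall>x\<in>X. (\<Sum>j<n. c j * real_of_int (x ! j)) = 0"
  shows "Elim n X \<noteq> S n"
proof -
  obtain f where f: "f < n" "c f \<noteq> 0" "\<forall>j<f. c j = 0"
  proof -
    have "\<exists>f. (f < n \<and> c f \<noteq> 0) \<and> (\<forall>j<f. \<not> (j < n \<and> c j \<noteq> 0))"
      using exists_least_iff[of "\<lambda>f. f < n \<and> c f \<noteq> 0"] j0 by blast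
    then show ?thesis using that by (meson order.strict_trans)
  qed
  define \<sigma> where "\<sigma> j = (if c j > 0 then 1 else if c j < 0 then -1 else (0::int))" for j
  define e where "e = \<sigma> f"
  define s where "s = map (\<lambda>j. e * \<sigma> j) [0..<n]"
  have e: "e = 1 \<or> e = -1" using f(2) by (auto simp: e_def \<sigma>_def)
  have snth: "j < n \<Longrightarrow> s ! j = e * \<sigma> j" for j by (simp add: s_def)
  have sS: "s \<in> S n"
    unfolding S_def
  proof (intro CollectI conjI)
    show "length s = n" by (simp add: s_def)
    show "set s \<subseteq> {-1,0,1}" using e by (auto simp: s_def \<sigma>_def split: if_splits)
    show "\<exists>i<n. s ! i \<noteq> 0 \<and> s ! i = 1 \<and> (\<forall>j<i. s ! j = 0)"
      using f e by (intro exI[of _ f]) (auto simp: snth e_def \<sigma>_def)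
  qed
  have "s \<notin> Elim n X"
  proof
    assume "s \<in> Elim n X"
    then obtain x where x: "x \<in> X" and el: "eliminates (map V x) s" by (auto simp: Elim_def)
    have lx: "length x = n" using x X by (auto simp: S_def)
    have ls: "length s = n" by (simp add: s_def)
    from el obtain i k where i: "i < n" "x ! i \<noteq> 0" "s ! i \<noteq> 0"
      and k: "k = 1 \<or> k = -1"
      and hk: "\<forall>j<n. s ! j \<noteq> 0 \<and> x ! j \<noteq> 0 \<longrightarrow> x ! j = k * s ! j"
    proof -
      have "\<exists>i<n. x ! i \<noteq> 0 \<and> s ! i \<noteq> 0"
        using el lx ls unfolding eliminates_def by auto
      moreover have "\<exists>k. (k = 1 \<or> k = -1) \<and> (\<forall>j<n. s ! j \<noteq> 0 \<and> x ! j \<noteq> 0 \<longrightarrow> x ! j = k * s ! j)"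
        using el lx ls unfolding eliminates_def by auto
      ultimately show ?thesis using that by blast
    qed
    have hterm: "c j * real_of_int (x ! j) = real_of_int (k * e) * (if x ! j \<noteq> 0 then \<bar>c j\<bar> else 0)"
      if j: "j < n" for j
    proof (cases "x ! j = 0")
      case True then show ?thesis by simp
    next
      case False
      show ?thesis
      proof (cases "c j = 0")
        case True then show ?thesis by simp
      next
        case cj: False
        have "s ! j \<noteq> 0" using cj e by (auto simp: snth j \<sigma>_def)
        then have "x ! j = k * (e * \<sigma> j)" using hk j False snth by auto
        then show ?thesis using False cj e k
          by (auto simp: \<sigma>_def abs_if)
      qed
    qed
    have "(\<Sum>j<n. c j * real_of_int (x ! j)) = real_of_int (k * e) * (\<Sum>j<n. (if x ! j \<noteq> 0 then \<bar>c j\<bar> else 0))"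
      by (simp add: hterm sum_distrib_left)
    moreover have "(\<Sum>j<n. (if x ! j \<noteq> 0 then \<bar>c j\<bar> else 0)) \<ge> (if x ! i \<noteq> 0 then \<bar>c i\<bar> else 0)"
      by (rule member_le_sum) (use i in auto)
    moreover have "c i \<noteq> 0" using i(3) snth[OF i(1)] by (auto simp: \<sigma>_def)
    moreover have "real_of_int (k * e) \<noteq> 0" using k e by auto
    ultimately have "(\<Sum>j<n. c j * real_of_int (x ! j)) \<noteq> 0" using i(2) by auto
    then show False using hc x by auto
  qed
  then show ?thesis using sS by auto
qed

theorem mainTheorem4:
  fixes n :: nat and X :: "int list set"
  assumes "X \<subseteq> S n"
  shows "((\<exists>c :: nat \<Rightarrow> real. (\<exists>j<n. c j \<noteq> 0) \<and>
             (\<forall>x\<in>X. (\<Sum>j<n. c j * real_of_int (x ! j)) = 0))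
          \<longrightarrow> Elim n X \<noteq> S n)
       \<and> ((Elim n X = S n \<and> card X = n)
          \<longrightarrow> (\<forall>a :: int list \<Rightarrow> real.
                (\<forall>j<n. (\<Sum>x\<in>X. a x * real_of_int (x ! j)) = 0) \<longrightarrow> (\<forall>x\<in>X. a x = 0)))"
proof (intro conjI impI allI ballI)
  assume "\<exists>c :: nat \<Rightarrow> real. (\<exists>j<n. c j \<noteq> 0) \<and>
             (\<forall>x\<in>X. (\<Sum>j<n. c j * real_of_int (x ! j)) = 0)"
  then show "Elim n X \<noteq> S n" using part1[OF assms] by blast
next
  fix a :: "int list \<Rightarrow> real" and x0
  assume H: "Elim n X = S n \<and> card X = n"
    and ha: "\<forall>j<n. (\<Sum>x\<in>X. a x * real_of_int (x ! j)) = 0" and x0: "x0 \<in> X"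
  show "a x0 = 0"
  proof (rule ccontr)
    assume ax0: "a x0 \<noteq> 0"
    have "finite (S n)"
      by (rule finite_subset[of _ "{xs. set xs \<subseteq> {-1,0,1::int} \<and> length xs = n}"])
         (auto simp: S_def intro: finite_lists_length_eq)
    then have fin: "finite X" using assms finite_subset by blast
    obtain xs where xs: "distinct xs" "set xs = X" using finite_distinct_list[OF fin] by blast
    have len: "length xs = n" using H xs distinct_card by fastforce
    have sumX: "(\<Sum>x\<in>X. g x) = (\<Sum>i<n. g (xs ! i))" for g :: "int list \<Rightarrow> real"
    proof -
      have "(\<Sum>x\<in>X. g x) = sum_list (map g xs)"
        using xs by (simp add: sum_list_distinct_conv_sum_set)
      also have "\<dots> = (\<Sum>i = 0..<length (map g xs). map g xs ! i)"
        by (rule sum_list_sum_nth)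
      also have "\<dots> = (\<Sum>i<n. g (xs ! i))"
        using len by (simp add: lessThan_atLeast0)
      finally show ?thesis .
    qed
    define A :: "real mat" where "A = mat n n (\<lambda>(i,j). real_of_int (xs ! i ! j))"
    define v where "v = vec n (\<lambda>i. a (xs ! i))"
    have A: "A \<in> carrier_mat n n" by (simp add: A_def)
    have AT: "transpose_mat A \<in> carrier_mat n n" using A by simp
    have "transpose_mat A *\<^sub>v v = 0\<^sub>v n"
    proof (rule eq_vecI)
      fix j assume j: "j < dim_vec (0\<^sub>v n :: real vec)"
      then have j: "j < n" by simp
      have "(transpose_mat A *\<^sub>v v) $ j = (\<Sum>i<n. real_of_int (xs ! i ! j) * a (xs ! i))"
        using j A by (simp add: scalar_prod_def A_def v_def lessThan_atLeast0)
      also have "\<dots> = (\<Sum>x\<in>X. a x * real_of_int (x ! j))"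
        by (simp add: sumX mult.commute)
      also have "\<dots> = 0" using ha j by simp
      finally show "(transpose_mat A *\<^sub>v v) $ j = 0\<^sub>v n $ j" using j by simp
    qed (use A in simp)
    moreover have "v \<noteq> 0\<^sub>v n"
    proof
      assume "v = 0\<^sub>v n"
      obtain i where "i < n" "xs ! i = x0" using xs x0 len by (metis in_set_conv_nth)
      then have "v $ i = a x0" by (simp add: v_def)
      with \<open>v = 0\<^sub>v n\<close> \<open>i < n\<close> ax0 show False by simp
    qed
    moreover have "v \<in> carrier_vec n" by (simp add: v_def)
    ultimately have "det (transpose_mat A) = 0"
      using det_0_iff_vec_prod_zero_field[OF AT] by blast
    then have "det A = 0" using det_transpose[OF A] by simp
    then obtain w where w: "w \<in> carrier_vec n" "w \<noteq> 0\<^sub>v n" "A *\<^sub>v w = 0\<^sub>v n"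
      using det_0_iff_vec_prod_zero_field[OF A] by blast
    have "\<exists>j<n. w $ j \<noteq> 0"
    proof (rule ccontr)
      assume "\<not> ?thesis"
      then have "w = 0\<^sub>v n" using w(1) by (intro eq_vecI) auto
      with w(2) show False by simp
    qed
    moreover have "\<forall>x\<in>X. (\<Sum>j<n. w $ j * real_of_int (x ! j)) = 0"
    proof
      fix x assume "x \<in> X"
      then obtain i where i: "i < n" "xs ! i = x" using xs len by (metis in_set_conv_nth)
      have "(A *\<^sub>v w) $ i = (\<Sum>j<n. real_of_int (xs ! i ! j) * w $ j)"
        using i w(1) A by (simp add: scalar_prod_def A_def lessThan_atLeast0)
      then show "(\<Sum>j<n. w $ j * real_of_int (x ! j)) = 0"
        using w(3) i by (simp add: mult.commute)
    qed
    ultimately have "Elim n X \<noteq> S n" using part1[OF assms] by blast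
    with H show False by simp
  qed
qed

end
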